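(* Let $n\ge2$ be an integer, $x_0,t_0\in\mathbb{R}$, $\beta>0$, $\lambda>0$, $\psi(t,x)=(x-x_0)^2-\beta(t-t_0)^2$, $\ell=\lambda\psi$, and let $w\in C^\infty(\mathbb{R}^2;\mathbb{R})$. With $I_2(w)$ as defined in the context, there exist expressions $A,B$, each a finite sum of terms of the form $c\,\ell_x^{\,a}\ell_{xx}^{\,b}\,\partial_x^{i}u_1\,\partial_x^{j}u_2$ with $u_1,u_2\in\{w,\partial_t w\}$, such that pointwise $$\partial_t w\; I_2(w)=\partial_t A+\partial_x B+\sum_{(r,s,m)\in D_C}d_C(r,s,m)\,\ell_x^{\,r}\ell_{xx}^{\,s}\,\partial_x^m\partial_t w\,\partial_x^{m+1}w,$$ where $D_C=\{(r,s,m)\in\mathbb{Z}_{\ge0}^3:\ r+2s+2m+1=n,\ s\ge3,\ s\text{ odd}\}$ and $$d_C(r,s,m)=(-1)^{n+m}\frac{(s-1)(2m+s)(n-2m-s-1)}{2(m+s)}\binom{n}{2m+s+1}\binom{m+s}{s}\prod_{j=1}^{s-1}(r+j).$$ In particular, if $n\le 6$ then $\partial_t w\,I_2(w)=\partial_tA+\partial_xB$.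
   Context: $\binom{j}{k}$ denotes the binomial coefficient (zero unless $0\le k\le j$). $$I_2(w)=\sum_{\substack{k\in[0,n]\\ k\ \text{even}}}\binom{n}{k}(-1)^{n-k}\ell_x^{\,n-k}\partial_x^k w-\binom{n}{2}\ell_{xx}\sum_{\substack{j\in[0,n-2]\\ j\ \text{odd}}}\binom{n-2}{j}(-1)^{n-2-j}\ell_x^{\,n-2-j}\partial_x^j w.$$ *)

theory Defs
  imports "HOL-Analysis.Analysis"
begin

text \<open>Functions on R^2 are written f :: real \<times> real \<Rightarrow> real, with points (t, x).\<close>

definition pdt :: "(real \<times> real \<Rightarrow> real) \<Rightarrow> real \<times> real \<Rightarrow> real" where
  "pdt f = (\<lambda>(t, x). deriv (\<lambda>s. f (s, x)) t)"

definition pdx :: "(real \<times> real \<Rightarrow> real) \<Rightarrow> real \<times> real \<Rightarrow> real" where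
  "pdx f = (\<lambda>(t, x). deriv (\<lambda>y. f (t, y)) x)"

fun mixed :: "bool list \<Rightarrow> (real \<times> real \<Rightarrow> real) \<Rightarrow> real \<times> real \<Rightarrow> real" where
  "mixed [] f = f"
| "mixed (d # ds) f = (if d then pdt else pdx) (mixed ds f)"

text \<open>C^\<infinity>(R^2; R): every iterated partial derivative is (Frechet) differentiable
  everywhere (hence all partial derivatives of all orders exist and are continuous).\<close>
definition smooth2 :: "(real \<times> real \<Rightarrow> real) \<Rightarrow> bool" where
  "smooth2 f \<longleftrightarrow> (\<forall>ds. mixed ds f differentiable_on UNIV)"

definition I2 :: "nat \<Rightarrow> (real \<times> real \<Rightarrow> real) \<Rightarrow> (real \<times> real \<Rightarrow> real) \<Rightarrow> real \<times> real \<Rightarrow> real" where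
  "I2 n l w p =
     (\<Sum>k\<in>{k. k \<le> n \<and> even k}. real (n choose k) * (-1) ^ (n - k) * (pdx l p) ^ (n - k) * (pdx ^^ k) w p)
     - real (n choose 2) * pdx (pdx l) p *
       (\<Sum>j\<in>{j. j \<le> n - 2 \<and> odd j}. real ((n - 2) choose j) * (-1) ^ (n - 2 - j) * (pdx l p) ^ (n - 2 - j) * (pdx ^^ j) w p)"

text \<open>A monomial c * l_x^a * l_xx^b * d_x^i u1 * d_x^j u2, where u_k = d_t w if the flag is True,
  and u_k = w otherwise.\<close>
datatype bterm = BTerm real nat nat nat nat bool bool

fun bterm_val :: "(real \<times> real \<Rightarrow> real) \<Rightarrow> (real \<times> real \<Rightarrow> real) \<Rightarrow> bterm \<Rightarrow> real \<times> real \<Rightarrow> real" where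
  "bterm_val l w (BTerm c a b i j k1 k2) p =
     c * (pdx l p) ^ a * (pdx (pdx l) p) ^ b
       * (pdx ^^ i) (if k1 then pdt w else w) p * (pdx ^^ j) (if k2 then pdt w else w) p"

definition expr_val :: "(real \<times> real \<Rightarrow> real) \<Rightarrow> (real \<times> real \<Rightarrow> real) \<Rightarrow> bterm list \<Rightarrow> real \<times> real \<Rightarrow> real" where
  "expr_val l w ts p = (\<Sum>tm\<leftarrow>ts. bterm_val l w tm p)"

definition DC :: "nat \<Rightarrow> (nat \<times> nat \<times> nat) set" where
  "DC n = {(r, s, m). r + 2 * s + 2 * m + 1 = n \<and> s \<ge> 3 \<and> odd s}"

definition dC :: "nat \<Rightarrow> nat \<Rightarrow> nat \<Rightarrow> nat \<Rightarrow> real" where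
  "dC n r s m = (-1) ^ (n + m) *
     ((real s - 1) * (2 * real m + real s) * (real n - 2 * real m - real s - 1) / (2 * (real m + real s)))
     * real (n choose (2 * m + s + 1)) * real ((m + s) choose s)
     * (\<Prod>j\<in>{1..s - 1}. real r + real j)"

end

theory Submission
  imports Defs
begin


lemma mixed_append: "mixed (ds @ es) f = mixed ds (mixed es f)"
  by (induction ds) auto

lemma smooth2_mixed: "smooth2 f \<Longrightarrow> smooth2 (mixed ds f)"
  unfolding smooth2_def by (metis mixed_append)

lemma smooth2_pdx: "smooth2 f \<Longrightarrow> smooth2 (pdx f)"
  using smooth2_mixed[of f "[False]"] by simp

lemma smooth2_pdt: "smooth2 f \<Longrightarrow> smooth2 (pdt f)"
  using smooth2_mixed[of f "[True]"] by simp

lemma smooth2_pdx_pow: "smooth2 f \<Longrightarrow> smooth2 ((pdx ^^ i) f)"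
  by (induction i) (auto intro: smooth2_pdx)

lemma smooth2_diff: "smooth2 f \<Longrightarrow> f differentiable (at z)"
proof -
  assume "smooth2 f"
  then have "f differentiable_on UNIV" unfolding smooth2_def using mixed.simps(1) by metis
  then show ?thesis by (metis differentiable_on_def UNIV_I at_within_open open_UNIV)
qed

lemma smooth2_cont: "smooth2 f \<Longrightarrow> isCont f z"
  using smooth2_diff differentiable_imp_continuous_within by blast

lemma dx_DERIV:
  assumes "smooth2 f"
  shows "((\<lambda>y. f (t, y)) has_real_derivative pdx f (t, x)) (at x)"
proof -
  have "(\<lambda>y. f (t, y)) differentiable (at x)"
  proof -
    have "(\<lambda>y::real. (t, y)) differentiable (at x)" by (auto intro!: derivative_intros)
    moreover have "f differentiable (at ((\<lambda>y. (t,y)) x))" using smooth2_diff[OF assms] .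
    ultimately show ?thesis using differentiable_chain_at[of "\<lambda>y. (t,y)" x f] by (simp add: o_def)
  qed
  then show ?thesis unfolding pdx_def using DERIV_deriv_iff_real_differentiable by auto
qed

lemma dt_DERIV:
  assumes "smooth2 f"
  shows "((\<lambda>s. f (s, x)) has_real_derivative pdt f (t, x)) (at t)"
proof -
  have "(\<lambda>s. f (s, x)) differentiable (at t)"
  proof -
    have "(\<lambda>s::real. (s, x)) differentiable (at t)" by (auto intro!: derivative_intros)
    moreover have "f differentiable (at ((\<lambda>s. (s,x)) t))" using smooth2_diff[OF assms] .
    ultimately show ?thesis using differentiable_chain_at[of "\<lambda>s. (s,x)" t f] by (simp add: o_def)
  qed
  then show ?thesis unfolding pdt_def using DERIV_deriv_iff_real_differentiable by auto
qed

lemma dist_pair_le: "dist (a::real,b::real) (c,d) \<le> dist a c + dist b d"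
  by (metis diff_Pair dist_norm norm_Pair_le)

lemma schwarz_pt:
  assumes sm: "smooth2 f"
  shows "pdt (pdx f) (t,x) = pdx (pdt f) (t,x)"
proof (rule ccontr)
  define F where "F = pdx (pdt f)"
  define G where "G = pdt (pdx f)"
  have smF: "smooth2 F" unfolding F_def by (intro smooth2_pdx smooth2_pdt sm)
  have smG: "smooth2 G" unfolding G_def by (intro smooth2_pdx smooth2_pdt sm)
  assume "pdt (pdx f) (t,x) \<noteq> pdx (pdt f) (t,x)"
  then have ne: "G (t,x) \<noteq> F (t,x)" unfolding F_def G_def .
  define e where "e = \<bar>G (t,x) - F (t,x)\<bar> / 2"
  have e: "e > 0" using ne unfolding e_def by simp
  obtain d1 where d1: "d1 > 0" "\<And>z. dist z (t,x) < d1 \<Longrightarrow> dist (F z) (F (t,x)) < e"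
    using smooth2_cont[OF smF, of "(t,x)"] e unfolding continuous_at_eps_delta by blast
  obtain d2 where d2: "d2 > 0" "\<And>z. dist z (t,x) < d2 \<Longrightarrow> dist (G z) (G (t,x)) < e"
    using smooth2_cont[OF smG, of "(t,x)"] e unfolding continuous_at_eps_delta by blast
  define h where "h = min d1 d2 / 2"
  have h: "h > 0" "2 * h \<le> d1" "2 * h \<le> d2" using d1 d2 unfolding h_def by auto
  define D where "D = f (t+h, x+h) - f (t+h, x) - f (t, x+h) + f (t, x)"
  obtain \<sigma> where \<sigma>: "t < \<sigma>" "\<sigma> < t + h"
    "(f (t+h, x+h) - f (t+h, x)) - (f (t, x+h) - f (t, x)) = ((t+h) - t) * (pdt f (\<sigma>, x+h) - pdt f (\<sigma>, x))"
  proof -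
    have "\<exists>z. t < z \<and> z < t+h \<and> (f (t+h, x+h) - f (t+h, x)) - (f (t, x+h) - f (t, x)) = ((t+h) - t) * (pdt f (z, x+h) - pdt f (z, x))"
      by (rule MVT2[of t "t+h" "\<lambda>s. f (s, x+h) - f (s, x)" "\<lambda>s. pdt f (s, x+h) - pdt f (s, x)"])
        (use h in \<open>auto intro!: derivative_eq_intros dt_DERIV[OF sm]\<close>)
    then show ?thesis using that by blast
  qed
  obtain \<eta> where \<eta>: "x < \<eta>" "\<eta> < x + h"
    "pdt f (\<sigma>, x+h) - pdt f (\<sigma>, x) = ((x+h) - x) * F (\<sigma>, \<eta>)"
  proof -
    have "\<exists>z. x < z \<and> z < x+h \<and> pdt f (\<sigma>, x+h) - pdt f (\<sigma>, x) = ((x+h) - x) * F (\<sigma>, z)"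
      by (rule MVT2[of x "x+h" "\<lambda>y. pdt f (\<sigma>, y)" "\<lambda>y. F (\<sigma>, y)"])
        (use h in \<open>auto simp: F_def intro!: dx_DERIV smooth2_pdt sm\<close>)
    then show ?thesis using that by blast
  qed
  obtain \<xi> where \<xi>: "x < \<xi>" "\<xi> < x + h"
    "(f (t+h, x+h) - f (t, x+h)) - (f (t+h, x) - f (t, x)) = ((x+h) - x) * (pdx f (t+h, \<xi>) - pdx f (t, \<xi>))"
  proof -
    have "\<exists>z. x < z \<and> z < x+h \<and> (f (t+h, x+h) - f (t, x+h)) - (f (t+h, x) - f (t, x)) = ((x+h) - x) * (pdx f (t+h, z) - pdx f (t, z))"
      by (rule MVT2[of x "x+h" "\<lambda>y. f (t+h, y) - f (t, y)" "\<lambda>y. pdx f (t+h, y) - pdx f (t, y)"])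
        (use h in \<open>auto intro!: derivative_eq_intros dx_DERIV[OF sm]\<close>)
    then show ?thesis using that by blast
  qed
  obtain \<tau> where \<tau>: "t < \<tau>" "\<tau> < t + h"
    "pdx f (t+h, \<xi>) - pdx f (t, \<xi>) = ((t+h) - t) * G (\<tau>, \<xi>)"
  proof -
    have "\<exists>z. t < z \<and> z < t+h \<and> pdx f (t+h, \<xi>) - pdx f (t, \<xi>) = ((t+h) - t) * G (z, \<xi>)"
      by (rule MVT2[of t "t+h" "\<lambda>s. pdx f (s, \<xi>)" "\<lambda>s. G (s, \<xi>)"])
        (use h in \<open>auto simp: G_def intro!: dt_DERIV smooth2_pdx sm\<close>)
    then show ?thesis using that by blast
  qed
  have "h * (h * F (\<sigma>, \<eta>)) = h * (h * G (\<tau>, \<xi>))"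
    using \<sigma>(3) \<eta>(3) \<xi>(3) \<tau>(3) by (simp add: algebra_simps)
  then have eq: "F (\<sigma>, \<eta>) = G (\<tau>, \<xi>)" using h by simp
  have "dist (\<sigma>, \<eta>) (t,x) \<le> dist \<sigma> t + dist \<eta> x" by (rule dist_pair_le)
  also have "\<dots> < 2 * h" using \<sigma> \<eta> by (simp add: dist_real_def)
  finally have 1: "dist (F (\<sigma>, \<eta>)) (F (t,x)) < e" using d1 h by auto
  have "dist (\<tau>, \<xi>) (t,x) \<le> dist \<tau> t + dist \<xi> x" by (rule dist_pair_le)
  also have "\<dots> < 2 * h" using \<tau> \<xi> by (simp add: dist_real_def)
  finally have 2: "dist (G (\<tau>, \<xi>)) (G (t,x)) < e" using d2 h by auto
  from 1 2 eq show False unfolding e_def dist_real_def by (simp add: abs_if split: if_splits)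
qed

lemma schwarz: "smooth2 f \<Longrightarrow> pdt (pdx f) = pdx (pdt f)"
  using schwarz_pt by fastforce

lemma pdt_pdx_pow: "smooth2 f \<Longrightarrow> pdt ((pdx ^^ i) f) = (pdx ^^ i) (pdt f)"
proof (induction i)
  case (Suc i)
  then show ?case using schwarz[OF smooth2_pdx_pow[OF Suc.prems, of i]] by simp
qed simp




fun scaleT :: "real \<Rightarrow> bterm \<Rightarrow> bterm" where
  "scaleT r (BTerm c a b i j k1 k2) = BTerm (r * c) a b i j k1 k2"

lemma bterm_val_scale: "bterm_val l w (scaleT r T) p = r * bterm_val l w T p"
  by (cases T) simp

lemma expr_val_scale: "expr_val l w (map (scaleT r) A) p = r * expr_val l w A p"
  unfolding expr_val_def by (induction A) (auto simp: bterm_val_scale algebra_simps)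

lemma expr_val_append: "expr_val l w (A @ B) p = expr_val l w A p + expr_val l w B p"
  unfolding expr_val_def by simp

lemma expr_val_Cons: "expr_val l w (T # A) p = bterm_val l w T p + expr_val l w A p"
  unfolding expr_val_def by simp

lemma expr_val_single: "expr_val l w [T] = bterm_val l w T"
  unfolding expr_val_def by auto

lemma expr_val_Nil: "expr_val l w [] = (\<lambda>_. 0)"
  unfolding expr_val_def by auto

lemma pdx_at: "((\<lambda>y. F (t,y)) has_real_derivative D) (at x) \<Longrightarrow> pdx F (t,x) = D"
  unfolding pdx_def by (simp add: DERIV_imp_deriv)

lemma pdt_at: "((\<lambda>s. F (s,x)) has_real_derivative D) (at t) \<Longrightarrow> pdt F (t,x) = D"
  unfolding pdt_def by (simp add: DERIV_imp_deriv)

locale setting =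
  fixes lam x0 t0 \<beta> :: real and w l :: "real \<times> real \<Rightarrow> real"
  assumes sm: "smooth2 w"
    and ldef: "l = (\<lambda>(t, x). lam * ((x - x0)^2 - \<beta> * (t - t0)^2))"
begin

lemma pdx_l: "pdx l = (\<lambda>(t,x). 2 * lam * (x - x0))"
proof -
  have "deriv (\<lambda>y. lam * ((y - x0)^2 - \<beta> * (t - t0)^2)) x = 2 * lam * (x - x0)" for t x
    by (rule DERIV_imp_deriv) (auto intro!: derivative_eq_intros)
  then show ?thesis unfolding pdx_def ldef by auto
qed

lemma pdx_pdx_l0: "pdx (\<lambda>(t,x). 2 * lam * (x - x0)) = (\<lambda>_. 2 * lam)"
proof -
  have "deriv (\<lambda>y. 2 * lam * (y - x0)) x = 2 * lam" for x
    by (rule DERIV_imp_deriv) (auto intro!: derivative_eq_intros)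
  then show ?thesis unfolding pdx_def by auto
qed

lemma pdx_pdx_l: "pdx (pdx l) = (\<lambda>_. 2 * lam)"
  unfolding pdx_l by (rule pdx_pdx_l0)

definition Wf :: "nat \<Rightarrow> bool \<Rightarrow> real \<times> real \<Rightarrow> real" where
  "Wf i k = (pdx ^^ i) (if k then pdt w else w)"

lemma sm_Wf: "smooth2 (Wf i k)"
  unfolding Wf_def using sm smooth2_pdt smooth2_pdx_pow by auto

lemma Wf_Suc: "pdx (Wf i k) = Wf (Suc i) k"
  unfolding Wf_def by simp

lemma pdt_Wf: "pdt (Wf i False) = Wf i True"
  unfolding Wf_def using pdt_pdx_pow[OF sm] by simp

lemma bv_eq: "bterm_val l w (BTerm c a b i j k1 k2) (t,x) =
   c * (2 * lam * (x - x0))^a * (2 * lam)^b * Wf i k1 (t,x) * Wf j k2 (t,x)"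
  by (simp add: pdx_l pdx_pdx_l0 Wf_def)

lemma bt_dx: "((\<lambda>y. bterm_val l w (BTerm c a b i j k1 k2) (t,y)) has_real_derivative
   (bterm_val l w (BTerm (c * real a) (a - 1) (b + 1) i j k1 k2) (t,x)
    + bterm_val l w (BTerm c a b (i+1) j k1 k2) (t,x)
    + bterm_val l w (BTerm c a b i (j+1) k1 k2) (t,x))) (at x)"
proof -
  have d1: "((\<lambda>y. Wf i k1 (t,y)) has_real_derivative Wf (Suc i) k1 (t,x)) (at x)"
    using dx_DERIV[OF sm_Wf[of i k1]] Wf_Suc by simp
  have d2: "((\<lambda>y. Wf j k2 (t,y)) has_real_derivative Wf (Suc j) k2 (t,x)) (at x)"
    using dx_DERIV[OF sm_Wf[of j k2]] Wf_Suc by simp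
  show ?thesis unfolding bv_eq
    apply (rule derivative_eq_intros refl d1 d2)+
    apply (cases a)
     apply (auto simp: algebra_simps)
    done
qed

lemma bt_dt: "((\<lambda>s. bterm_val l w (BTerm c a b i j k1 k2) (s,x)) has_real_derivative
   c * (2 * lam * (x - x0))^a * (2 * lam)^b * (pdt (Wf i k1) (t,x) * Wf j k2 (t,x) + Wf i k1 (t,x) * pdt (Wf j k2) (t,x))) (at t)"
proof -
  have d1: "((\<lambda>s. Wf i k1 (s,x)) has_real_derivative pdt (Wf i k1) (t,x)) (at t)"
    using dt_DERIV[OF sm_Wf[of i k1]] by simp
  have d2: "((\<lambda>s. Wf j k2 (s,x)) has_real_derivative pdt (Wf j k2) (t,x)) (at t)"
    using dt_DERIV[OF sm_Wf[of j k2]] by simp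
  show ?thesis unfolding bv_eq
    by (rule derivative_eq_intros refl d1 d2)+ (auto simp: algebra_simps)
qed

lemma bterm_dx_diff: "(\<lambda>y. bterm_val l w T (t,y)) differentiable (at x)"
  by (cases T) (use bt_dx real_differentiable_def in blast)

lemma bterm_dt_diff: "(\<lambda>s. bterm_val l w T (s,x)) differentiable (at t)"
  by (cases T) (use bt_dt real_differentiable_def in blast)

lemma expr_dx_diff: "(\<lambda>y. expr_val l w A (t,y)) differentiable (at x)"
proof (induction A)
  case Nil then show ?case by (simp add: expr_val_Nil)
next
  case (Cons T A) then show ?case
    unfolding expr_val_Cons by (intro differentiable_add bterm_dx_diff)
qed

lemma expr_dt_diff: "(\<lambda>s. expr_val l w A (s,x)) differentiable (at t)"
proof (induction A)
  case Nil then show ?case by (simp add: expr_val_Nil)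
next
  case (Cons T A) then show ?case
    unfolding expr_val_Cons by (intro differentiable_add bterm_dt_diff)
qed

lemma expr_dx: "((\<lambda>y. expr_val l w A (t,y)) has_real_derivative pdx (expr_val l w A) (t,x)) (at x)"
  using expr_dx_diff DERIV_deriv_iff_real_differentiable unfolding pdx_def by auto

lemma expr_dt: "((\<lambda>s. expr_val l w A (s,x)) has_real_derivative pdt (expr_val l w A) (t,x)) (at t)"
  using expr_dt_diff DERIV_deriv_iff_real_differentiable unfolding pdt_def by auto

definition exact :: "(real \<times> real \<Rightarrow> real) \<Rightarrow> bool" where
  "exact F \<longleftrightarrow> (\<exists>A B. \<forall>t x. F (t,x) = pdt (expr_val l w A) (t,x) + pdx (expr_val l w B) (t,x))"

lemma exact_lin:
  assumes "exact F" "exact G"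
  shows "exact (\<lambda>z. a * F z + b * G z)"
proof -
  obtain A1 B1 where 1: "\<And>t x. F (t,x) = pdt (expr_val l w A1) (t,x) + pdx (expr_val l w B1) (t,x)"
    using assms(1) unfolding exact_def by blast
  obtain A2 B2 where 2: "\<And>t x. G (t,x) = pdt (expr_val l w A2) (t,x) + pdx (expr_val l w B2) (t,x)"
    using assms(2) unfolding exact_def by blast
  define A where "A = map (scaleT a) A1 @ map (scaleT b) A2"
  define B where "B = map (scaleT a) B1 @ map (scaleT b) B2"
  have eA: "expr_val l w A = (\<lambda>z. a * expr_val l w A1 z + b * expr_val l w A2 z)"
    unfolding A_def by (auto simp: expr_val_append expr_val_scale)
  have eB: "expr_val l w B = (\<lambda>z. a * expr_val l w B1 z + b * expr_val l w B2 z)"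
    unfolding B_def by (auto simp: expr_val_append expr_val_scale)
  have pA: "pdt (expr_val l w A) (t,x) = a * pdt (expr_val l w A1) (t,x) + b * pdt (expr_val l w A2) (t,x)" for t x
    unfolding eA
    by (rule pdt_at) ((rule derivative_eq_intros expr_dt refl)+, simp)
  have pB: "pdx (expr_val l w B) (t,x) = a * pdx (expr_val l w B1) (t,x) + b * pdx (expr_val l w B2) (t,x)" for t x
    unfolding eB
    by (rule pdx_at) ((rule derivative_eq_intros expr_dx refl)+, simp)
  show ?thesis unfolding exact_def
    by (rule exI[of _ A], rule exI[of _ B]) (auto simp: pA pB 1 2 algebra_simps)
qed

lemma exact_zero: "exact (\<lambda>_. 0)"
proof -
  have "pdt (\<lambda>_::real\<times>real. 0::real) = (\<lambda>_. 0)" "pdx (\<lambda>_::real\<times>real. 0::real) = (\<lambda>_. 0)"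
    unfolding pdt_def pdx_def by auto
  then show ?thesis unfolding exact_def by (intro exI[of _ "[]"]) (simp add: expr_val_Nil)
qed

lemma exact_cong: "exact G \<Longrightarrow> (\<And>t x. F (t,x) = G (t,x)) \<Longrightarrow> exact F"
  unfolding exact_def by metis

lemma exact_dx: "exact (pdx (bterm_val l w T))"
proof -
  have "pdt (\<lambda>_::real\<times>real. 0::real) = (\<lambda>_. 0)" unfolding pdt_def by auto
  then show ?thesis unfolding exact_def
    by (intro exI[of _ "[]"] exI[of _ "[T]"]) (simp add: expr_val_Nil expr_val_single)
qed

lemma exact_dt: "exact (pdt (bterm_val l w T))"
proof -
  have "pdx (\<lambda>_::real\<times>real. 0::real) = (\<lambda>_. 0)" unfolding pdx_def by auto
  then show ?thesis unfolding exact_def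
    by (intro exI[of _ "[T]"] exI[of _ "[]"]) (simp add: expr_val_Nil expr_val_single)
qed

lemma exact_add: "exact F \<Longrightarrow> exact G \<Longrightarrow> exact (\<lambda>z. F z + G z)"
  using exact_lin[of F G 1 1] by simp

lemma exact_scale: "exact F \<Longrightarrow> exact (\<lambda>z. a * F z)"
  using exact_lin[of F "\<lambda>_. 0" a 0] exact_zero by simp

lemma exact_sum: "finite S \<Longrightarrow> (\<And>i. i \<in> S \<Longrightarrow> exact (f i)) \<Longrightarrow> exact (\<lambda>z. \<Sum>i\<in>S. f i z)"
  by (induction S rule: finite_induct) (auto intro: exact_add exact_zero)

definition V :: "nat \<Rightarrow> nat \<Rightarrow> nat \<Rightarrow> nat \<Rightarrow> real \<times> real \<Rightarrow> real" where
  "V p q i k = bterm_val l w (BTerm 1 p q i k True False)"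

lemma R1: "exact (\<lambda>z. V p q (i+1) k z + V p q i (k+1) z + real p * V (p-1) (q+1) i k z)"
proof (rule exact_cong[OF exact_dx[of "BTerm 1 p q i k True False"]])
  fix t x
  have "pdx (bterm_val l w (BTerm 1 p q i k True False)) (t,x) =
    bterm_val l w (BTerm (1 * real p) (p - 1) (q + 1) i k True False) (t,x)
    + bterm_val l w (BTerm 1 p q (i+1) k True False) (t,x)
    + bterm_val l w (BTerm 1 p q i (k+1) True False) (t,x)"
    by (rule pdx_at) (rule bt_dx)
  then show "V p q (i+1) k (t,x) + V p q i (k+1) (t,x) + real p * V (p-1) (q+1) i k (t,x) =
     pdx (bterm_val l w (BTerm 1 p q i k True False)) (t,x)"
    unfolding V_def by simp
qed

lemma R2: "exact (V p q m m)"
proof (rule exact_cong[OF exact_dt[of "BTerm (1/2) p q m m False False"]])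
  fix t x
  have "pdt (bterm_val l w (BTerm (1/2) p q m m False False)) (t,x) =
    1/2 * (2 * lam * (x - x0))^p * (2 * lam)^q * (pdt (Wf m False) (t,x) * Wf m False (t,x) + Wf m False (t,x) * pdt (Wf m False) (t,x))"
    by (rule pdt_at) (rule bt_dt)
  then show "V p q m m (t,x) = pdt (bterm_val l w (BTerm (1/2) p q m m False False)) (t,x)"
    unfolding V_def bv_eq pdt_Wf by (simp add: algebra_simps)
qed

end



definition ff :: "nat \<Rightarrow> nat \<Rightarrow> real" where
  "ff p s = (if s \<le> p then fact p / fact (p - s) else 0)"

lemma ff_0[simp]: "ff p 0 = 1"
  unfolding ff_def by simp

lemma ff_rec: "s \<ge> 1 \<Longrightarrow> real p * ff (p - 1) (s - 1) = ff p s"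
proof (cases "s \<le> p")
  case True
  assume s: "s \<ge> 1"
  then have p: "p \<ge> 1" using True by simp
  have "fact p = real p * fact (p - 1)" using p by (metis fact_reduce neq0_conv not_one_le_zero)
  moreover have "p - 1 - (s - 1) = p - s" using s by simp
  ultimately show ?thesis using True s unfolding ff_def by auto
next
  case False
  assume s: "s \<ge> 1"
  then show ?thesis using False unfolding ff_def by auto
qed

definition coef :: "nat \<Rightarrow> nat \<Rightarrow> nat \<Rightarrow> real" where
  "coef p m s = (-1) ^ (m + s) * real ((m + s) choose s) * ff p s"

lemma coef_rec:
  assumes "m > 0 \<or> s > 0"
  shows "coef p m s = (if m = 0 then 0 else - coef p (m - 1) s)
     + (if s = 0 then 0 else - real p * coef (p - 1) m (s - 1))"
proof (cases "m = 0")
  case True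
  then have s: "s \<ge> 1" using assms by simp
  then obtain k where k: "s = Suc k" by (cases s) auto
  have "real p * ff (p - 1) (s - 1) = ff p s" using ff_rec[OF s] .
  then show ?thesis using True unfolding coef_def k by (simp add: algebra_simps)
next
  case False
  then obtain j where j: "m = Suc j" by (cases m) auto
  show ?thesis
  proof (cases "s = 0")
    case True
    then show ?thesis unfolding coef_def j by simp
  next
    case False
    then obtain k where k: "s = Suc k" by (cases s) auto
    have pas: "(Suc j + Suc k) choose (Suc k) = ((j + Suc k) choose (Suc k)) + ((Suc j + k) choose k)"
      by simp
    have "real p * ff (p - 1) k = ff p (Suc k)" using ff_rec[of "Suc k" p] by simp
    then show ?thesis unfolding coef_def j k pas
      by (simp add: algebra_simps)
  qed
qed

lemma sum_lt_pad: "(M::nat) \<le> N \<Longrightarrow> (\<Sum>m<N. if m < M then f m else 0) = (\<Sum>m<M. f m)"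
proof -
  assume MN: "M \<le> N"
  then have "{m \<in> {..<N}. m < M} = {..<M}" using MN by auto
  then show ?thesis using sum.inter_filter[of "{..<N}" f "\<lambda>m. m < M"] by simp
qed

context setting begin

definition hh :: "nat \<Rightarrow> nat" where "hh d = (d + 1) div 2"

definition CF :: "nat \<Rightarrow> nat \<Rightarrow> nat \<Rightarrow> nat \<Rightarrow> real \<times> real \<Rightarrow> real" where
  "CF p q i d z = (\<Sum>m<hh d. coef p m (d - 1 - 2*m) * V (p - (d - 1 - 2*m)) (q + (d - 1 - 2*m)) (i + m) (i + m + 1) z)"

lemma CF_rec:
  "CF p q i (d + 2) z = - CF p q (i + 1) d z - real p * CF (p - 1) (q + 1) i (d + 1) z"
proof -
  define g where "g m = coef p m (d + 1 - 2*m) * V (p - (d + 1 - 2*m)) (q + (d + 1 - 2*m)) (i + m) (i + m + 1) z" for m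
  have h2: "hh (d + 2) = Suc (hh d)" unfolding hh_def by simp
  have h1: "hh (d + 1) \<le> Suc (hh d)" unfolding hh_def by simp
  have L: "CF p q i (d + 2) z = (\<Sum>m<Suc (hh d). g m)"
    unfolding CF_def h2 g_def by (intro sum.cong) (auto simp: numeral_2_eq_2)
  define g1 where "g1 m = coef p m (d - 1 - 2*m) * V (p - (d - 1 - 2*m)) (q + (d - 1 - 2*m)) (i + 1 + m) (i + 1 + m + 1) z" for m
  define g2 where "g2 m = coef (p - 1) m (d + 1 - 1 - 2*m) * V (p - 1 - (d + 1 - 1 - 2*m)) (q + 1 + (d + 1 - 1 - 2*m)) (i + m) (i + m + 1) z" for m
  have R1: "- CF p q (i + 1) d z = (\<Sum>m<Suc (hh d). if m = 0 then 0 else - g1 (m - 1))"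
    unfolding CF_def g1_def sum.lessThan_Suc_shift by (simp add: sum_negf)
  have R2: "- real p * CF (p - 1) (q + 1) i (d + 1) z = (\<Sum>m<Suc (hh d). if m < hh (d+1) then - real p * g2 m else 0)"
    unfolding sum_lt_pad[OF h1] CF_def g2_def by (simp add: sum_distrib_left)
  have T: "g m = (if m = 0 then 0 else - g1 (m - 1)) + (if m < hh (d+1) then - real p * g2 m else 0)"
    if m: "m < Suc (hh d)" for m
  proof -
    define s where "s = d + 1 - 2*m"
    have m2: "2 * m \<le> d + 1" using m unfolding hh_def by simp
    have sge: "s = 0 \<longleftrightarrow> \<not> m < hh (d+1)" unfolding s_def hh_def using m2 by auto
    have ms: "m > 0 \<or> s > 0" unfolding s_def using m2 by auto
    have e1: "m \<noteq> 0 \<Longrightarrow> g1 (m - 1) = coef p (m - 1) s * V (p - s) (q + s) (i + m) (i + m + 1) z"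
      unfolding g1_def s_def by (cases m) (auto simp: algebra_simps)
    have e2: "g2 m = coef (p - 1) m (s - 1) * V (p - s) (q + s) (i + m) (i + m + 1) z" if sn: "s \<noteq> 0"
    proof -
      have a1: "d + 1 - 1 - 2*m = s - 1" unfolding s_def by simp
      have a2: "p - 1 - (s - 1) = p - s" using sn by simp
      have a3: "q + 1 + (s - 1) = q + s" using sn by simp
      show ?thesis unfolding g2_def a1 a2 a3 ..
    qed
    have e0: "g m = coef p m s * V (p - s) (q + s) (i + m) (i + m + 1) z"
      unfolding g_def s_def ..
    show ?thesis unfolding e0 coef_rec[OF ms] using e1 e2 sge
      by (auto simp: algebra_simps)
  qed
  have "(\<Sum>m<Suc (hh d). g m) = (\<Sum>m<Suc (hh d). (if m = 0 then 0 else - g1 (m - 1)))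
     + (\<Sum>m<Suc (hh d). if m < hh (d+1) then - real p * g2 m else 0)"
    unfolding sum.distrib[symmetric] by (rule sum.cong) (auto simp: T)
  then show ?thesis using L R1 R2 by (simp add: algebra_simps)
qed

lemma LemA: "exact (\<lambda>z. V p q i (i + d) z - CF p q i d z)"
proof (induction d arbitrary: p q i rule: less_induct)
  case (less d)
  consider "d = 0" | "d = 1" | d' where "d = d' + 2"
  proof -
    have "d = 0 \<or> d = 1 \<or> (\<exists>d'. d = d' + 2)" by presburger
    then show ?thesis using that by blast
  qed
  then show ?case
  proof cases
    case 1
    have "CF p q i 0 z = 0" for z unfolding CF_def hh_def by simp
    then show ?thesis using 1 by (intro exact_cong[OF R2[of p q i]]) simp
  next
    case 2
    have "CF p q i 1 z = V p q i (i + 1) z" for z unfolding CF_def hh_def coef_def by simp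
    then show ?thesis using 2 by (intro exact_cong[OF exact_zero]) simp
  next
    case 3
    have e1: "exact (\<lambda>z. V p q (i+1) (i+d'+1) z + V p q i (i+d'+1+1) z + real p * V (p-1) (q+1) i (i+d'+1) z)"
      by (rule R1)
    have i1: "exact (\<lambda>z. V p q (i+1) ((i+1)+d') z - CF p q (i+1) d' z)"
      using less[of d' p q "i+1"] 3 by simp
    have i2: "exact (\<lambda>z. V (p-1) (q+1) i (i+(d'+1)) z - CF (p-1) (q+1) i (d'+1) z)"
      using less[of "d'+1" "p-1" "q+1" i] 3 by simp
    have c: "exact (\<lambda>z. 1 * (1 * (V p q (i+1) (i+d'+1) z + V p q i (i+d'+1+1) z + real p * V (p-1) (q+1) i (i+d'+1) z)
        + (-1) * (V p q (i+1) ((i+1)+d') z - CF p q (i+1) d' z))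
        + (- real p) * (V (p-1) (q+1) i (i+(d'+1)) z - CF (p-1) (q+1) i (d'+1) z))"
      by (intro exact_lin e1 i1 i2)
    show ?thesis
    proof (rule exact_cong[OF c])
      fix t x
      have cr: "CF p q i (Suc (Suc d')) (t,x) = - CF p q (i + 1) d' (t,x) - real p * CF (p - 1) (q + 1) i (d' + 1) (t,x)"
        using CF_rec[of p q i d' "(t,x)"] by (simp add: numeral_2_eq_2)
      show "V p q i (i + d) (t, x) - CF p q i d (t, x) =
        1 * (1 * (V p q (i + 1) (i + d' + 1) (t, x) + V p q i (i + d' + 1 + 1) (t, x) + real p * V (p - 1) (q + 1) i (i + d' + 1) (t, x))
         + - 1 * (V p q (i + 1) (i + 1 + d') (t, x) - CF p q (i + 1) d' (t, x)))
         + - real p * (V (p - 1) (q + 1) i (i + (d' + 1)) (t, x) - CF (p - 1) (q + 1) i (d' + 1) (t, x))"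
        unfolding 3 using cr by (simp add: numeral_2_eq_2 algebra_simps)
    qed
  qed
qed

end



lemma prod_shift_fact: "(\<Prod>j\<in>{1..k}. real r + real j) = fact (r + k) / fact r"
proof (induction k)
  case 0 then show ?case by simp
next
  case (Suc k)
  have "(\<Prod>j\<in>{1..Suc k}. real r + real j) = (real r + real (Suc k)) * (\<Prod>j\<in>{1..k}. real r + real j)"
    by (simp add: prod.nat_ivl_Suc' mult.commute)
  also have "\<dots> = fact (r + Suc k) / fact r" unfolding Suc by (simp add: algebra_simps)
  finally show ?case .
qed

lemma ff_shift: "ff (r + k) k = fact (r + k) / fact r"
  unfolding ff_def by simp

lemma binom_I1: "j + 2 \<le> n \<Longrightarrow> 2 * (n choose 2) * ((n - 2) choose j) = (n choose (j+1)) * (j+1) * (n - (j+1))"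
proof -
  assume jn: "j + 2 \<le> n"
  have cm: "(n choose (j+2)) * ((j+2) choose 2) = (n choose 2) * ((n - 2) choose j)"
    using choose_mult[of 2 "j+2" n] jn by simp
  have c2: "2 * ((j+2) choose 2) = (j+2) * (j+1)"
    using binomial_absorption[of 1 "j+2"] by (simp add: numeral_2_eq_2)
  have ab1: "(j+2) * (n choose (j+2)) = n * ((n-1) choose (j+1))"
    using binomial_absorption[of "j+1" n] by (simp add: numeral_2_eq_2)
  have ab2: "(n - (j+1)) * (n choose (j+1)) = n * ((n-1) choose (j+1))" by (rule binomial_absorb_comp)
  have ab: "(n choose (j+2)) * (j+2) = (n - (j+1)) * (n choose (j+1))"
    using ab1 ab2 by (metis mult.commute)
  have "2 * (n choose 2) * ((n - 2) choose j) = (n choose (j+2)) * (j+2) * (j+1)"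
    using cm c2 by (metis mult.assoc mult.left_commute)
  also have "\<dots> = ((n - (j+1)) * (n choose (j+1))) * (j+1)" unfolding ab ..
  also have "\<dots> = (n choose (j+1)) * (j+1) * (n - (j+1))" by (simp only: mult.commute mult.left_commute)
  finally show ?thesis .
qed

lemma binom_I2: "(m + s) * ((m + s0) choose s0) = Suc s0 * ((m + Suc s0) choose Suc s0)" if "s = Suc s0"
  using Suc_times_binomial[of s0 "m + s0"] that by (simp add: mult.commute)

definition c1 :: "nat \<Rightarrow> nat \<Rightarrow> real" where "c1 n k = real (n choose k) * (-1) ^ (n - k)"
definition c2 :: "nat \<Rightarrow> nat \<Rightarrow> real" where "c2 n j = real ((n - 2) choose j) * (-1) ^ (n - 2 - j)"

lemma coef_id:
  assumes s: "odd s" and le: "2*m + 2* s + 1 \<le> n"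
  shows "c1 n (2*m+s+1) * coef (n - (2*m+s+1)) m s
     - real (n choose 2) * (c2 n (2*m+s) * coef (n - 2 - (2*m+s)) m (s - 1))
     = dC n (n - (2*m+2* s+1)) s m"
proof -
  obtain r where n: "n = r + 2*m + 2* s + 1" using le by (metis add.commute le_add_diff_inverse add.assoc)
  obtain u where u: "s = 2*u + 1" using s oddE by blast
  define s0 where "s0 = 2*u"
  have s0: "s = Suc s0" unfolding s0_def u by simp
  define P where "P = fact (r + s0) / (fact r :: real)"
  define X where "X = real (n choose (2*m+s+1))"
  define Y where "Y = real ((m+s) choose s)"
  define Z where "Z = real (n choose 2) * real ((n - 2) choose (2*m+s))"
  define Wm where "Wm = real ((m + s0) choose s0)"
  have I1: "2 * Z = X * (2*m+s+1) * (r + s)"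
  proof -
    have "2 * m + s + 2 \<le> n" using n u by simp
    then have "2 * (n choose 2) * ((n - 2) choose (2*m+s)) = (n choose (2*m+s+1)) * (2*m+s+1) * (n - (2*m+s+1))"
      using binom_I1[of "2*m+s" n] by simp
    moreover have "n - (2*m+s+1) = r + s" using n by simp
    ultimately show ?thesis unfolding Z_def X_def
      by (metis (mono_tags, lifting) of_nat_mult of_nat_numeral of_nat_add of_nat_1 mult.assoc)
  qed
  have I2: "(real m + real s) * Wm = real s * Y"
    using binom_I2[OF s0, of m] unfolding Wm_def Y_def s0
    by (metis of_nat_add of_nat_mult)
  have ffa: "ff (n - (2*m+s+1)) s = (real r + real s) * P"
  proof -
    have "n - (2*m+s+1) = r + s" using n by simp
    moreover have "fact (r + s) = (real r + real s) * (fact (r + s0) :: real)"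
      unfolding s0 by simp
    ultimately show ?thesis unfolding ff_def P_def by simp
  qed
  have ffb: "ff (n - 2 - (2*m+s)) (s - 1) = P"
  proof -
    have "n - 2 - (2*m+s) = r + s0" using n s0 by simp
    then show ?thesis unfolding ff_def P_def s0 by simp
  qed
  have pr: "(\<Prod>j\<in>{1..s - 1}. real (n - (2*m+2* s+1)) + real j) = P"
  proof -
    have "n - (2*m+2* s+1) = r" using n by simp
    then show ?thesis unfolding P_def prod_shift_fact s0 by simp
  qed
  have sg1: "(-1::real) ^ (n - (2*m+s+1)) = - ((-1) ^ r)"
  proof -
    have "n - (2*m+s+1) = r + 2*u + 1" using n u by simp
    then show ?thesis by (simp add: power_add)
  qed
  have sg2: "(-1::real) ^ (m + s) = - ((-1) ^ m)" unfolding u by (simp add: power_add)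
  have sg3: "(-1::real) ^ (n - 2 - (2*m+s)) = (-1) ^ r"
  proof -
    have "n - 2 - (2*m+s) = r + 2*u" using n u by simp
    then show ?thesis by (simp add: power_add)
  qed
  have sg4: "(-1::real) ^ (m + (s - 1)) = (-1) ^ m" unfolding u by (simp add: power_add)
  have sg5: "(-1::real) ^ (n + m) = - ((-1) ^ (r + m))"
  proof -
    have "n + m = (r + m) + 2*(m + 2*u + 1) + 1" using n u by simp
    then show ?thesis by (simp only: power_add power_mult) simp
  qed
  have rn: "real n - 2 * real m - real s - 1 = real r + real s" using n by simp
  have ms: "real m + real s > 0" using u by simp
  have Wm': "Wm = real s * Y / (real m + real s)" using I2 ms by (simp add: field_simps)
  have Z': "Z = X * (2*m+s+1) * (r + s) / 2" using I1 by simp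
  have lhs: "c1 n (2*m+s+1) * coef (n - (2*m+s+1)) m s
     - real (n choose 2) * (c2 n (2*m+s) * coef (n - 2 - (2*m+s)) m (s - 1))
     = (-1)^(r+m) * P * (X * Y * (real r + real s) - Z * Wm)"
    unfolding c1_def c2_def coef_def ffa ffb sg1 sg2 sg3 sg4 X_def[symmetric] Y_def[symmetric]
    unfolding Z_def Wm_def s0 by (simp add: power_add algebra_simps)
  have rhs: "dC n (n - (2*m+2* s+1)) s m = - ((-1)^(r+m)) * ((real s - 1) * (2 * real m + real s) * (real r + real s) / (2 * (real m + real s))) * X * Y * P"
    unfolding dC_def pr sg5 rn X_def[symmetric] Y_def[symmetric] by simp
  show ?thesis unfolding lhs rhs Wm' Z' using ms
    by (simp add: field_simps)
qed




lemma shift_sum: "(n::nat) \<ge> 1 \<Longrightarrow> f (n - 1) = 0 \<Longrightarrow> (\<Sum>s<n. f s) = (\<Sum>s<n. if s = 0 then 0 else f (s - 1))"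
proof -
  assume n: "n \<ge> 1" and f: "f (n - 1) = 0"
  have "(\<Sum>s<Suc n. if s = 0 then 0 else f (s - 1)) = (\<Sum>s<n. f s)"
    unfolding sum.lessThan_Suc_shift by simp
  moreover have "(\<Sum>s<Suc n. if s = 0 then 0 else f (s - 1)) = (\<Sum>s<n. if s = 0 then 0 else f (s - 1))"
    using n f by simp
  ultimately show ?thesis by simp
qed

lemma DC_sum: "(\<Sum>(r, s, m)\<in>DC n. F r s m) =
  (\<Sum>m<n. \<Sum>s<n. if 3 \<le> s \<and> odd s \<and> 2*m + 2 * s + 1 \<le> n then F (n - (2*m + 2 * s + 1)) s m else 0)"
proof -
  define P where "P = {x \<in> {..<n} \<times> {..<n}. 3 \<le> snd x \<and> odd (snd x) \<and> 2 * fst x + 2 * snd x + 1 \<le> n}"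
  define g where "g = (\<lambda>(m::nat, s::nat). (n - (2*m + 2 * s + 1), s, m))"
  have inj: "inj_on g P" unfolding inj_on_def g_def P_def by auto
  have img: "DC n = g ` P"
  proof
    show "DC n \<subseteq> g ` P"
    proof
      fix y assume y: "y \<in> DC n"
      obtain r s m where rsm: "y = (r, s, m)" by (cases y) auto
      have c: "r + 2 * s + 2 * m + 1 = n" "3 \<le> s" "odd s" using y unfolding rsm DC_def by auto
      have "(m, s) \<in> P" unfolding P_def using c by auto
      moreover have "g (m, s) = y" unfolding g_def rsm using c by auto
      ultimately show "y \<in> g ` P" by force
    qed
    show "g ` P \<subseteq> DC n" unfolding P_def g_def DC_def by auto
  qed
  have "(\<Sum>(r, s, m)\<in>DC n. F r s m) = (\<Sum>x\<in>P. (\<lambda>(r, s, m). F r s m) (g x))"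
    unfolding img by (rule sum.reindex[OF inj, unfolded o_def])
  also have "\<dots> = (\<Sum>x\<in>{..<n} \<times> {..<n}. if 3 \<le> snd x \<and> odd (snd x) \<and> 2 * fst x + 2 * snd x + 1 \<le> n
      then F (n - (2 * fst x + 2 * snd x + 1)) (snd x) (fst x) else 0)"
    unfolding P_def sum.inter_filter[OF finite_cartesian_product[OF finite_lessThan finite_lessThan]]
    by (intro sum.cong) (auto simp: g_def)
  also have "\<dots> = (\<Sum>m<n. \<Sum>s<n. if 3 \<le> s \<and> odd s \<and> 2*m + 2 * s + 1 \<le> n then F (n - (2*m + 2 * s + 1)) s m else 0)"
    unfolding sum.cartesian_product by (intro sum.cong) auto
  finally show ?thesis .
qed

context setting begin

lemma reidx:
  assumes fin: "finite K" and bd: "\<forall>k\<in>K. k \<le> n"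
  shows "(\<Sum>k\<in>K. \<Sum>m<hh k. G k m (k - 1 - 2*m)) =
    (\<Sum>m<n. \<Sum>s<n. if 2*m + s + 1 \<in> K then G (2*m + s + 1) m s else 0)"
proof -
  have inner: "(\<Sum>m<hh k. G k m (k - 1 - 2*m)) = (\<Sum>m<n. \<Sum>s<n. if 2*m + s + 1 = k then G k m s else 0)"
    if kn: "k \<le> n" for k
  proof -
    have one: "(\<Sum>s<n. if 2*m + s + 1 = k then G k m s else 0) = (if m < hh k then G k m (k - 1 - 2*m) else 0)" for m
    proof (cases "m < hh k")
      case True
      then have mk: "2*m + 1 \<le> k" unfolding hh_def by simp
      have "(\<Sum>s<n. if 2*m + s + 1 = k then G k m s else 0) = (\<Sum>s<n. if k - 1 - 2*m = s then G k m (k - 1 - 2*m) else 0)"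
      proof (rule sum.cong[OF refl])
        fix s
        have eq: "(2*m + s + 1 = k) = (k - 1 - 2*m = s)" using mk by arith
        show "(if 2*m + s + 1 = k then G k m s else 0) = (if k - 1 - 2*m = s then G k m (k - 1 - 2*m) else 0)"
          unfolding eq by auto
      qed
      also have "\<dots> = G k m (k - 1 - 2*m)"
      proof -
        have "k - 1 - 2*m < n" using mk kn by simp
        then show ?thesis by (simp add: sum.delta)
      qed
      finally show ?thesis using True by simp
    next
      case False
      then have "\<forall>s. 2*m + s + 1 \<noteq> k" unfolding hh_def by presburger
      then show ?thesis using False by simp
    qed
    have "(\<Sum>m<n. \<Sum>s<n. if 2*m + s + 1 = k then G k m s else 0) = (\<Sum>m<n. if m < hh k then G k m (k - 1 - 2*m) else 0)"
      unfolding one ..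
    also have "\<dots> = (\<Sum>m<hh k. G k m (k - 1 - 2*m))"
      by (rule sum_lt_pad) (use kn in \<open>simp add: hh_def\<close>)
    finally show ?thesis by simp
  qed
  have "(\<Sum>k\<in>K. \<Sum>m<hh k. G k m (k - 1 - 2*m)) = (\<Sum>k\<in>K. \<Sum>m<n. \<Sum>s<n. if 2*m + s + 1 = k then G k m s else 0)"
  proof (rule sum.cong[OF refl])
    fix k assume "k \<in> K"
    then have "k \<le> n" using bd by blast
    then show "(\<Sum>m<hh k. G k m (k - 1 - 2*m)) = (\<Sum>m<n. \<Sum>s<n. if 2*m + s + 1 = k then G k m s else 0)"
      by (rule inner)
  qed
  also have "\<dots> = (\<Sum>m<n. \<Sum>k\<in>K. \<Sum>s<n. if 2*m + s + 1 = k then G k m s else 0)"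
    by (rule sum.swap)
  also have "\<dots> = (\<Sum>m<n. \<Sum>s<n. \<Sum>k\<in>K. if 2*m + s + 1 = k then G k m s else 0)"
    by (intro sum.cong refl sum.swap)
  also have "\<dots> = (\<Sum>m<n. \<Sum>s<n. if 2*m + s + 1 \<in> K then G (2*m + s + 1) m s else 0)"
    by (intro sum.cong refl) (rule sum.delta'[OF fin])
  finally show ?thesis .
qed

lemma V0: "V p q 0 k z = (pdx l z)^p * (pdx (pdx l) z)^q * pdt w z * (pdx ^^ k) w z"
  by (simp add: V_def)

lemma step1: "pdt w z * I2 n l w z =
   (\<Sum>k\<in>{k. k \<le> n \<and> even k}. c1 n k * V (n - k) 0 0 k z)
   - real (n choose 2) * (\<Sum>j\<in>{j. j \<le> n - 2 \<and> odd j}. c2 n j * V (n - 2 - j) 1 0 j z)"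
proof -
  obtain t x where z: "z = (t, x)" by (cases z) auto
  show ?thesis unfolding z I2_def V0 c1_def c2_def
    by (simp add: right_diff_distrib sum_distrib_left mult_ac)
qed

definition M :: "nat \<Rightarrow> real \<times> real \<Rightarrow> real" where
  "M n z = (\<Sum>k\<in>{k. k \<le> n \<and> even k}. c1 n k * CF (n - k) 0 0 k z)
   - real (n choose 2) * (\<Sum>j\<in>{j. j \<le> n - 2 \<and> odd j}. c2 n j * CF (n - 2 - j) 1 0 j z)"

lemma step2: "exact (\<lambda>z. pdt w z * I2 n l w z - M n z)"
proof -
  have e1: "exact (\<lambda>z. \<Sum>k\<in>{k. k \<le> n \<and> even k}. c1 n k * (V (n - k) 0 0 (0 + k) z - CF (n - k) 0 0 k z))"
    by (intro exact_sum exact_scale LemA) auto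
  have e2: "exact (\<lambda>z. \<Sum>j\<in>{j. j \<le> n - 2 \<and> odd j}. c2 n j * (V (n - 2 - j) 1 0 (0 + j) z - CF (n - 2 - j) 1 0 j z))"
    by (intro exact_sum exact_scale LemA) auto
  have e: "exact (\<lambda>z. 1 * (\<Sum>k\<in>{k. k \<le> n \<and> even k}. c1 n k * (V (n - k) 0 0 (0 + k) z - CF (n - k) 0 0 k z))
     + (- real (n choose 2)) * (\<Sum>j\<in>{j. j \<le> n - 2 \<and> odd j}. c2 n j * (V (n - 2 - j) 1 0 (0 + j) z - CF (n - 2 - j) 1 0 j z)))"
    by (rule exact_lin[OF e1 e2])
  show ?thesis
    by (rule exact_cong[OF e]) (simp add: step1 M_def right_diff_distrib sum_subtractf algebra_simps)
qed

lemma ff_zero: "p < s \<Longrightarrow> ff p s = 0"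
  unfolding ff_def by simp

lemma coef_zero: "p < s \<Longrightarrow> coef p m s = 0"
  unfolding coef_def using ff_zero by simp

lemma termwise:
 "(if 2*m + s + 1 \<in> {k. k \<le> n \<and> even k} then c1 n (2*m + s + 1) * (coef (n - (2*m + s + 1)) m s * V (n - (2*m + s + 1) - s) (0 + s) (0 + m) (0 + m + 1) z) else 0)
  - real (n choose 2) * (if s = 0 then 0 else (if 2*m + (s - 1) + 1 \<in> {j. j \<le> n - 2 \<and> odd j}
      then c2 n (2*m + (s - 1) + 1) * (coef (n - 2 - (2*m + (s - 1) + 1)) m (s - 1) * V (n - 2 - (2*m + (s - 1) + 1) - (s - 1)) (1 + (s - 1)) (0 + m) (0 + m + 1) z) else 0))
  = (if 3 \<le> s \<and> odd s \<and> 2*m + 2 * s + 1 \<le> n then dC n (n - (2*m + 2 * s + 1)) s m * (pdx l z) ^ (n - (2*m + 2 * s + 1)) * (pdx (pdx l) z) ^ s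
      * (pdx ^^ m) (pdt w) z * (pdx ^^ (m + 1)) w z else 0)"
  (is "?A - ?C * ?B = ?R")
proof -
  define T where "T = V (n - (2*m + 2 * s + 1)) s m (m + 1) z"
  have TF: "T = (pdx l z) ^ (n - (2*m + 2 * s + 1)) * (pdx (pdx l) z) ^ s * (pdx ^^ m) (pdt w) z * (pdx ^^ (m + 1)) w z"
    unfolding T_def V_def by simp
  show ?thesis
  proof (cases "odd s")
    case False
    have "?A = 0" using False by auto
    moreover have "?B = 0" using False by auto
    moreover have "?R = 0" using False by auto
    ultimately show ?thesis by simp
  next
    case os: True
    then have s1: "s \<ge> 1" by (cases s) auto
    show ?thesis
    proof (cases "2*m + 2 * s + 1 \<le> n")
      case le: True
      have a1: "n - (2*m + s + 1) - s = n - (2*m + 2 * s + 1)" by simp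
      have a2: "n - 2 - (2*m + (s - 1) + 1) - (s - 1) = n - (2*m + 2 * s + 1)" using s1 by simp
      have a3: "1 + (s - 1) = s" "2*m + (s - 1) + 1 = 2*m + s" using s1 by auto
      have A: "?A = c1 n (2*m + s + 1) * coef (n - (2*m + s + 1)) m s * T"
        using le os unfolding T_def a1 by simp
      have a2': "n - 2 - (2*m + s) - (s - 1) = n - (2*m + 2 * s + 1)" using s1 by simp
      have g: "2*m + (s - 1) + 1 \<in> {j. j \<le> n - 2 \<and> odd j}" using le os s1 by auto
      have "?B = c2 n (2*m + (s - 1) + 1) * (coef (n - 2 - (2*m + (s - 1) + 1)) m (s - 1) * V (n - 2 - (2*m + (s - 1) + 1) - (s - 1)) (1 + (s - 1)) (0 + m) (0 + m + 1) z)"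
        using g s1 by simp
      also have "\<dots> = c2 n (2*m + s) * (coef (n - 2 - (2*m + s)) m (s - 1) * V (n - (2*m + 2 * s + 1)) s m (m + 1) z)"
        by (simp only: a3 a2' add_0)
      finally have B: "?B = c2 n (2*m + s) * coef (n - 2 - (2*m + s)) m (s - 1) * T"
        unfolding T_def by (simp only: mult.assoc)
      have "?A - ?C * ?B = dC n (n - (2*m + 2 * s + 1)) s m * T"
        unfolding A B coef_id[OF os le, symmetric] by (simp add: algebra_simps)
      moreover have "?R = dC n (n - (2*m + 2 * s + 1)) s m * T"
      proof (cases "s = 1")
        case True
        then show ?thesis unfolding dC_def by simp
      next
        case False
        then have "3 \<le> s" using os s1 by presburger
        then show ?thesis using os le unfolding TF by (simp add: mult.assoc)
      qed
      ultimately show ?thesis by simp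
    next
      case gt: False
      have "?A = 0"
      proof -
        have "n - (2*m + s + 1) < s" using gt s1 by arith
        then show ?thesis using coef_zero by simp
      qed
      moreover have "?B = 0"
      proof (cases "s = 1")
        case True
        then show ?thesis using gt by auto
      next
        case False
        then have "n - 2 - (2*m + (s - 1) + 1) < s - 1" using gt os s1 by presburger
        then show ?thesis using coef_zero by simp
      qed
      moreover have "?R = 0" using gt by auto
      ultimately show ?thesis by simp
    qed
  qed
qed

lemma step3:
  assumes n2: "n \<ge> 2"
  shows "M n z = (\<Sum>(r, s, m)\<in>DC n. dC n r s m * (pdx l z) ^ r * (pdx (pdx l) z) ^ s
             * (pdx ^^ m) (pdt w) z * (pdx ^^ (m + 1)) w z)"
proof -
  define Ke where "Ke = {k. k \<le> n \<and> even k}"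
  define Jo where "Jo = {j. j \<le> n - 2 \<and> odd j}"
  have fK: "finite Ke" and bK: "\<forall>k\<in>Ke. k \<le> n" unfolding Ke_def by auto
  have fJ: "finite Jo" and bJ: "\<forall>k\<in>Jo. k \<le> n" unfolding Jo_def by auto
  define A where "A m s = (if 2*m + s + 1 \<in> Ke then c1 n (2*m + s + 1) * (coef (n - (2*m + s + 1)) m s * V (n - (2*m + s + 1) - s) (0 + s) (0 + m) (0 + m + 1) z) else 0)" for m s
  define B where "B m s = (if 2*m + s + 1 \<in> Jo then c2 n (2*m + s + 1) * (coef (n - 2 - (2*m + s + 1)) m s * V (n - 2 - (2*m + s + 1) - s) (1 + s) (0 + m) (0 + m + 1) z) else 0)" for m s
  have T1: "(\<Sum>k\<in>Ke. c1 n k * CF (n - k) 0 0 k z) = (\<Sum>m<n. \<Sum>s<n. A m s)"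
  proof -
    have "(\<Sum>k\<in>Ke. c1 n k * CF (n - k) 0 0 k z) = (\<Sum>k\<in>Ke. \<Sum>m<hh k. c1 n k * (coef (n - k) m (k - 1 - 2*m) * V (n - k - (k - 1 - 2*m)) (0 + (k - 1 - 2*m)) (0 + m) (0 + m + 1) z))"
      unfolding CF_def sum_distrib_left ..
    also have "\<dots> = (\<Sum>m<n. \<Sum>s<n. A m s)"
      unfolding A_def by (rule reidx[OF fK bK, of "\<lambda>k m s. c1 n k * (coef (n - k) m s * V (n - k - s) (0 + s) (0 + m) (0 + m + 1) z)"])
    finally show ?thesis .
  qed
  have T2: "(\<Sum>j\<in>Jo. c2 n j * CF (n - 2 - j) 1 0 j z) = (\<Sum>m<n. \<Sum>s<n. B m s)"
  proof -
    have "(\<Sum>j\<in>Jo. c2 n j * CF (n - 2 - j) 1 0 j z) = (\<Sum>k\<in>Jo. \<Sum>m<hh k. c2 n k * (coef (n - 2 - k) m (k - 1 - 2*m) * V (n - 2 - k - (k - 1 - 2*m)) (1 + (k - 1 - 2*m)) (0 + m) (0 + m + 1) z))"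
      unfolding CF_def sum_distrib_left ..
    also have "\<dots> = (\<Sum>m<n. \<Sum>s<n. B m s)"
      unfolding B_def by (rule reidx[OF fJ bJ, of "\<lambda>k m s. c2 n k * (coef (n - 2 - k) m s * V (n - 2 - k - s) (1 + s) (0 + m) (0 + m + 1) z)"])
    finally show ?thesis .
  qed
  have sh: "(\<Sum>s<n. B m s) = (\<Sum>s<n. if s = 0 then 0 else B m (s - 1))" for m
  proof (rule shift_sum)
    show "1 \<le> n" using n2 by simp
    show "B m (n - 1) = 0" unfolding B_def Jo_def using n2 by auto
  qed
  have "M n z = (\<Sum>m<n. \<Sum>s<n. A m s) - real (n choose 2) * (\<Sum>m<n. \<Sum>s<n. if s = 0 then 0 else B m (s - 1))"
    unfolding M_def Ke_def[symmetric] Jo_def[symmetric] T1 T2 sh ..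
  also have "\<dots> = (\<Sum>m<n. \<Sum>s<n. A m s - real (n choose 2) * (if s = 0 then 0 else B m (s - 1)))"
    by (simp add: sum_subtractf sum_distrib_left)
  also have "\<dots> = (\<Sum>m<n. \<Sum>s<n. if 3 \<le> s \<and> odd s \<and> 2*m + 2 * s + 1 \<le> n then dC n (n - (2*m + 2 * s + 1)) s m * (pdx l z) ^ (n - (2*m + 2 * s + 1)) * (pdx (pdx l) z) ^ s
      * (pdx ^^ m) (pdt w) z * (pdx ^^ (m + 1)) w z else 0)"
    unfolding A_def B_def Ke_def Jo_def by (intro sum.cong refl termwise)
  also have "\<dots> = (\<Sum>(r, s, m)\<in>DC n. dC n r s m * (pdx l z) ^ r * (pdx (pdx l) z) ^ s
             * (pdx ^^ m) (pdt w) z * (pdx ^^ (m + 1)) w z)"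
    by (rule DC_sum[symmetric])
  finally show ?thesis .
qed

lemma main_exact:
  assumes "n \<ge> 2"
  shows "exact (\<lambda>z. pdt w z * I2 n l w z - (\<Sum>(r, s, m)\<in>DC n. dC n r s m * (pdx l z) ^ r * (pdx (pdx l) z) ^ s
             * (pdx ^^ m) (pdt w) z * (pdx ^^ (m + 1)) w z))"
  using step2[of n] step3[OF assms] by (simp add: exact_def)

end
theorem proposition4p1:
  fixes n :: nat and x0 t0 \<beta> lam :: real
    and w l :: "real \<times> real \<Rightarrow> real"
  assumes "n \<ge> 2" and "\<beta> > 0" and "lam > 0"
    and "l = (\<lambda>(t, x). lam * ((x - x0)^2 - \<beta> * (t - t0)^2))"
    and "smooth2 w"
  shows "\<exists>A B :: bterm list.
     (\<forall>t x. pdt w (t, x) * I2 n l w (t, x) =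
        pdt (expr_val l w A) (t, x) + pdx (expr_val l w B) (t, x)
        + (\<Sum>(r, s, m)\<in>DC n. dC n r s m * (pdx l (t, x)) ^ r * (pdx (pdx l) (t, x)) ^ s
             * (pdx ^^ m) (pdt w) (t, x) * (pdx ^^ (m + 1)) w (t, x)))
   \<and> (n \<le> 6 \<longrightarrow> (\<forall>t x. pdt w (t, x) * I2 n l w (t, x) =
        pdt (expr_val l w A) (t, x) + pdx (expr_val l w B) (t, x)))"
proof -
  interpret S: setting lam x0 t0 \<beta> w l
    by unfold_locales (use assms in auto)
  obtain A B where AB: "\<And>t x. pdt w (t, x) * I2 n l w (t, x) - (\<Sum>(r, s, m)\<in>DC n. dC n r s m * (pdx l (t, x)) ^ r * (pdx (pdx l) (t, x)) ^ s
             * (pdx ^^ m) (pdt w) (t, x) * (pdx ^^ (m + 1)) w (t, x)) = pdt (expr_val l w A) (t, x) + pdx (expr_val l w B) (t, x)"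
    using S.main_exact[OF assms(1)] unfolding S.exact_def by blast
  have DCe: "n \<le> 6 \<Longrightarrow> DC n = {}" unfolding DC_def by auto
  show ?thesis
  proof (intro exI conjI allI impI)
    fix t x
    show "pdt w (t, x) * I2 n l w (t, x) =
        pdt (expr_val l w A) (t, x) + pdx (expr_val l w B) (t, x)
        + (\<Sum>(r, s, m)\<in>DC n. dC n r s m * (pdx l (t, x)) ^ r * (pdx (pdx l) (t, x)) ^ s
             * (pdx ^^ m) (pdt w) (t, x) * (pdx ^^ (m + 1)) w (t, x))"
      using AB[of t x] by linarith
  next
    fix t x assume "n \<le> 6"
    then show "pdt w (t, x) * I2 n l w (t, x) =
        pdt (expr_val l w A) (t, x) + pdx (expr_val l w B) (t, x)"
      using AB[of t x] DCe by simp
  qed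
qed


end
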